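(* For every permutation $\pi$ in a Rauzy class, the modulus-two reduction of the Rauzy–Veech group preserves $Q_\pi$: $\overline{\mathrm{RV}}(\pi)\subseteq O(Q_\pi)$.
   Context: Permutations $\pi=(\pi_{\mathrm t},\pi_{\mathrm b})$ are pairs of bijections $\mathcal{A}\to\{1,\dots,d\}$, $d\ge3$, irreducible and nondegenerate. Rauzy induction: the top operation, with $\alpha_{\mathrm b,k}=\alpha_{\mathrm t,d}$, replaces the bottom row by $\alpha_{\mathrm b,1},\dots,\alpha_{\mathrm b,k},\alpha_{\mathrm b,d},\alpha_{\mathrm b,k+1},\dots,\alpha_{\mathrm b,d-1}$ (winner $\alpha_{\mathrm t,d}$, loser $\alpha_{\mathrm b,d}$); the bottom operation, with $\alpha_{\mathrm t,k}=\alpha_{\mathrm b,d}$, replaces the top row by $\alpha_{\mathrm t,1},\dots,\alpha_{\mathrm t,k},\alpha_{\mathrm t,d},\alpha_{\mathrm t,k+1},\dots,\alpha_{\mathrm t,d-1}$ (winner $\alpha_{\mathrm b,d}$, loser $\alpha_{\mathrm t,d}$); Rauzy classes are connected components of this directed graph. $B_\gamma=\mathrm{Id}+E_{\alpha_{\mathrm l}\alpha_{\mathrm w}}$ for an arrow, $B_{\gamma^{-1}}=B_\gamma^{-1}$, $B_{\gamma_1\cdots\gamma_n}=B_{\gamma_n}\cdots B_{\gamma_1}$; $\mathrm{RV}(\pi)$ is the group of $B_\gamma$ over closed walks at $\pi$ (arrows and reversed arrows), acting on row vectors. $(\Omega_\pi)_{\alpha\beta}=+1$ if $\pi_{\mathrm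 t}(\alpha)<\pi_{\mathrm t}(\beta)$ and $\pi_{\mathrm b}(\alpha)>\pi_{\mathrm b}(\beta)$, $-1$ if the reverse inequalities hold, $0$ otherwise. A bar denotes reduction mod 2. $Q_\pi(u)=\sum_{\pi_{\mathrm t}(\alpha)<\pi_{\mathrm t}(\beta)}u_\alpha(\Omega_\pi)_{\alpha\beta}u_\beta+\sum_\alpha u_\alpha\bmod2$ on $(\mathbb{Z}/2\mathbb{Z})^{\mathcal{A}}$, and $O(Q_\pi)$ is the group of invertible linear maps $S$ of $(\mathbb{Z}/2\mathbb{Z})^{\mathcal{A}}$ with $Q_\pi(uS)=Q_\pi(u)$ for all $u$. *)

theory Defs
  imports Main "HOL-Library.Z2" "HOL-Library.Cardinality"
begin

text \<open>A permutation on the finite alphabet 'a (with d = CARD('a)) is a pair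
  (pi_t, pi_b) of bijections 'a -> {1..d}.\<close>

type_synonym 'a perm2 = "('a \<Rightarrow> nat) \<times> ('a \<Rightarrow> nat)"

definition is_perm2 :: "('a::finite) perm2 \<Rightarrow> bool" where
  "is_perm2 p \<longleftrightarrow> bij_betw (fst p) UNIV {1..CARD('a)} \<and> bij_betw (snd p) UNIV {1..CARD('a)}"

definition irreducible :: "('a::finite) perm2 \<Rightarrow> bool" where
  "irreducible p \<longleftrightarrow> (\<forall>k. 1 \<le> k \<and> k < CARD('a) \<longrightarrow>
      {a. fst p a \<le> k} \<noteq> {a. snd p a \<le> k})"

text \<open>Degeneracy in the sense of Veech, written for the monodromy
  j \<mapsto> pi_b(alpha_{t,j}):
  (1) p(j+1) = p(j)+1; (2) p(j+1) = 1 and p(1) = p(j)+1;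
  (3) p(j+1) = p(d)+1 and p(j) = d, for some 1 \<le> j < d.\<close>

definition degenerate :: "('a::finite) perm2 \<Rightarrow> bool" where
  "degenerate p \<longleftrightarrow>
     (\<exists>a b. fst p b = fst p a + 1 \<and> snd p b = snd p a + 1) \<or>
     (\<exists>a b c. fst p b = fst p a + 1 \<and> fst p c = 1 \<and> snd p b = 1 \<and> snd p c = snd p a + 1) \<or>
     (\<exists>a b c. fst p b = fst p a + 1 \<and> fst p c = CARD('a) \<and> snd p b = snd p c + 1
              \<and> snd p a = CARD('a))"

definition letter_at :: "('a \<Rightarrow> nat) \<Rightarrow> nat \<Rightarrow> 'a" where
  "letter_at f j = (THE a. f a = j)"

text \<open>Moving the letter in last position d of row f to position k+1, shifting
  the letters in positions k+1..d-1 one step to the right.\<close>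
definition move_last :: "nat \<Rightarrow> nat \<Rightarrow> ('a \<Rightarrow> nat) \<Rightarrow> ('a \<Rightarrow> nat)" where
  "move_last d k f = (\<lambda>b. if f b \<le> k then f b else if f b = d then k + 1 else f b + 1)"

text \<open>Top operation: winner alpha_{t,d}, loser alpha_{b,d}; bottom row changes.\<close>
definition top_op :: "('a::finite) perm2 \<Rightarrow> 'a perm2" where
  "top_op p = (fst p, move_last CARD('a) (snd p (letter_at (fst p) CARD('a))) (snd p))"

text \<open>Bottom operation: winner alpha_{b,d}, loser alpha_{t,d}; top row changes.\<close>
definition bot_op :: "('a::finite) perm2 \<Rightarrow> 'a perm2" where
  "bot_op p = (move_last CARD('a) (fst p (letter_at (snd p) CARD('a))) (fst p), snd p)"

definition rauzy_arrow :: "('a::finite) perm2 \<Rightarrow> 'a perm2 \<Rightarrow> 'a \<Rightarrow> 'a \<Rightarrow> bool" where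
  "rauzy_arrow p q l w \<longleftrightarrow>
     (q = top_op p \<and> w = letter_at (fst p) CARD('a) \<and> l = letter_at (snd p) CARD('a)) \<or>
     (q = bot_op p \<and> w = letter_at (snd p) CARD('a) \<and> l = letter_at (fst p) CARD('a))"

type_synonym ('a, 'r) sqmat = "'a \<Rightarrow> 'a \<Rightarrow> 'r"

definition mat_id :: "('a, 'r::{zero,one}) sqmat" where
  "mat_id = (\<lambda>i j. if i = j then 1 else 0)"

definition mat_mult :: "('a::finite, 'r::comm_semiring_1) sqmat \<Rightarrow> ('a, 'r) sqmat \<Rightarrow> ('a, 'r) sqmat" where
  "mat_mult A B = (\<lambda>i j. \<Sum>k\<in>UNIV. A i k * B k j)"

definition vec_mat :: "('a::finite \<Rightarrow> 'r::comm_semiring_1) \<Rightarrow> ('a, 'r) sqmat \<Rightarrow> ('a \<Rightarrow> 'r)" where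
  "vec_mat u S = (\<lambda>j. \<Sum>i\<in>UNIV. u i * S i j)"

definition B_arrow :: "'a \<Rightarrow> 'a \<Rightarrow> ('a, int) sqmat" where
  "B_arrow l w = (\<lambda>i j. mat_id i j + (if i = l \<and> j = w then 1 else 0))"

definition B_arrow_inv :: "'a \<Rightarrow> 'a \<Rightarrow> ('a, int) sqmat" where
  "B_arrow_inv l w = (\<lambda>i j. mat_id i j - (if i = l \<and> j = w then 1 else 0))"

inductive walk_mat :: "('a::finite) perm2 \<Rightarrow> 'a perm2 \<Rightarrow> ('a, int) sqmat \<Rightarrow> bool"
  for p :: "'a perm2" where
  nil: "walk_mat p p mat_id"
| fwd: "walk_mat p q M \<Longrightarrow> rauzy_arrow q r l w \<Longrightarrow> walk_mat p r (mat_mult (B_arrow l w) M)"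
| bwd: "walk_mat p q M \<Longrightarrow> rauzy_arrow r q l w \<Longrightarrow> walk_mat p r (mat_mult (B_arrow_inv l w) M)"

definition RV :: "('a::finite) perm2 \<Rightarrow> ('a, int) sqmat set" where
  "RV p = {M. walk_mat p p M}"

definition mat_mod2 :: "('a, int) sqmat \<Rightarrow> ('a, bit) sqmat" where
  "mat_mod2 M = (\<lambda>i j. of_int (M i j))"

definition Omega :: "('a::finite) perm2 \<Rightarrow> ('a, int) sqmat" where
  "Omega p = (\<lambda>a b. if fst p a < fst p b \<and> snd p a > snd p b then 1
                   else if fst p a > fst p b \<and> snd p a < snd p b then -1 else 0)"

definition Qform :: "('a::finite) perm2 \<Rightarrow> ('a \<Rightarrow> bit) \<Rightarrow> bit" where
  "Qform p u = (\<Sum>a\<in>UNIV. \<Sum>b\<in>UNIV. if fst p a < fst p b then u a * of_int (Omega p a b) * u b else 0)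
               + (\<Sum>a\<in>UNIV. u a)"

definition OQ :: "('a::finite) perm2 \<Rightarrow> ('a, bit) sqmat set" where
  "OQ p = {S. (\<exists>T. mat_mult S T = mat_id \<and> mat_mult T S = mat_id) \<and>
              (\<forall>u. Qform p (vec_mat u S) = Qform p u)}"

end

theory Submission
  imports Defs
begin
declare add_bit_eq_xor[simp del] mult_bit_eq_and[simp del]

lemma bit_add_self[simp]: "(x::bit) + x = 0" by (cases x) simp_all
lemma bit_mult_self[simp]: "(x::bit) * x = x" by (cases x) simp_all
lemma bit_neg[simp]: "- (x::bit) = x" by simp
lemma bit_of_int_neg1[simp]: "(of_int (-1) :: bit) = 1" by simp

lemma if01_mult[simp]: "(if P then 1 else 0) * (x::'b::semiring_1) = (if P then x else 0)" by simp
lemma mult_if01[simp]: "(x::'b::semiring_1) * (if P then 1 else 0) = (if P then x else 0)" by simp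

lemma mat_mod2_mult: "mat_mod2 (mat_mult A B) = mat_mult (mat_mod2 A) (mat_mod2 B)"
  unfolding mat_mod2_def mat_mult_def by (simp add: of_int_sum)

lemma mat_mult_assoc: "mat_mult (mat_mult A B) C = mat_mult A (mat_mult B C)"
  unfolding mat_mult_def
  by (auto simp: fun_eq_iff sum_distrib_left sum_distrib_right mult.assoc intro: sum.swap)

lemma mat_mult_id_left[simp]: "mat_mult mat_id A = A"
  unfolding mat_mult_def mat_id_def by (simp add: fun_eq_iff)

lemma mat_mult_id_right[simp]: "mat_mult A mat_id = A"
  unfolding mat_mult_def mat_id_def by (simp add: fun_eq_iff)

lemma vec_mat_mult: "vec_mat u (mat_mult A B) = vec_mat (vec_mat u A) B"
  unfolding vec_mat_def mat_mult_def
  by (auto simp: fun_eq_iff sum_distrib_left sum_distrib_right mult.assoc intro: sum.swap)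

definition Bb :: "'a \<Rightarrow> 'a \<Rightarrow> ('a, bit) sqmat" where
  "Bb l w = mat_mod2 (B_arrow l w)"

lemma mod2_inv: "mat_mod2 (B_arrow_inv l w) = Bb l w"
  unfolding Bb_def mat_mod2_def B_arrow_def B_arrow_inv_def by (simp add: fun_eq_iff)

lemma Bb_eq: "Bb l w = (\<lambda>i j. (if i = j then 1 else 0) + (if i = l \<and> j = w then 1 else 0))"
  unfolding Bb_def mat_mod2_def B_arrow_def mat_id_def by (simp add: fun_eq_iff)

lemma vec_mat_Bb: "vec_mat u (Bb l w) = (\<lambda>j. u j + (if j = w then u l else 0))"
  unfolding Bb_eq vec_mat_def by (simp add: fun_eq_iff distrib_left sum.distrib)

lemma sum_if_out: "(\<Sum>b\<in>A. if Q then f b else 0) = (if Q then (\<Sum>b\<in>A. f b) else 0)"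
  by simp

definition SS :: "('a::finite \<Rightarrow> 'a \<Rightarrow> bool) \<Rightarrow> ('a \<Rightarrow> bit) \<Rightarrow> bit" where
  "SS P u = (\<Sum>a\<in>UNIV. \<Sum>b\<in>UNIV. if P a b then u a * u b else 0)"

lemma Qform_eq: "Qform p u = SS (\<lambda>a b. fst p a < fst p b \<and> snd p b < snd p a) u + (\<Sum>a\<in>UNIV. u a)"
  unfolding Qform_def SS_def Omega_def
  by (intro arg_cong2[where f="(+)"] refl sum.cong) auto

lemma SS_shift: "SS P (\<lambda>j. u j + (if j = w then c else 0)) =
   SS P u + c * (\<Sum>a\<in>UNIV. if P a w then u a else 0) + c * (\<Sum>b\<in>UNIV. if P w b then u b else 0)
   + (if P w w then c else 0)"
proof -
  have pw: "\<And>a b. (if P a b then (u a + (if a = w then c else 0)) * (u b + (if b = w then c else 0)) else 0)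
     = (if P a b then u a * u b else 0) + (if b = w then (if P a w then c * u a else 0) else 0)
       + (if a = w then (if P w b then c * u b else 0) else 0)
       + (if a = w then (if b = w then (if P w w then c else 0) else 0) else 0)"
    by (auto simp: algebra_simps)
  have e2: "(\<Sum>a\<in>UNIV. \<Sum>b\<in>UNIV. (if b = w then (if P a w then c * u a else 0) else (0::bit)))
     = c * (\<Sum>a\<in>UNIV. if P a w then u a else 0)"
    by (simp add: sum_distrib_left) (rule sum.cong, auto)
  have e3: "(\<Sum>a\<in>UNIV. \<Sum>b\<in>UNIV. (if a = w then (if P w b then c * u b else 0) else (0::bit)))
     = c * (\<Sum>b\<in>UNIV. if P w b then u b else 0)"
    by (simp only: sum_if_out sum.delta') (simp add: sum_distrib_left, rule sum.cong, auto)
  have e4: "(\<Sum>a\<in>UNIV. \<Sum>b\<in>UNIV. (if a = w then (if b = w then (if P w w then c else 0) else 0) else (0::bit)))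
     = (if P w w then c else 0)"
    by (simp only: sum_if_out sum.delta') simp
  show ?thesis unfolding SS_def pw sum.distrib e2 e3 e4 ..
qed

lemma SS_change:
  assumes "\<And>a b. a \<noteq> l \<Longrightarrow> b \<noteq> l \<Longrightarrow> P a b = P' a b" "\<not> P l l" "\<not> P' l l"
  shows "SS P' u = SS P u + (\<Sum>b\<in>UNIV. if P l b \<noteq> P' l b then u l * u b else 0)
     + (\<Sum>a\<in>UNIV. if P a l \<noteq> P' a l then u a * u l else 0)"
proof -
  define H where "H a b = (if P a b \<noteq> P' a b then u a * u b else 0)" for a b
  have inner: "(\<Sum>b\<in>UNIV. H a b) = H a l + (if a = l then (\<Sum>b\<in>UNIV. H l b) else 0)" for a
  proof (cases "a = l")
    case True then show ?thesis using assms(2,3) by (simp add: H_def)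
  next
    case False
    have "(\<Sum>b\<in>UNIV. H a b) = (\<Sum>b\<in>UNIV. if b = l then H a l else 0)"
      by (rule sum.cong) (auto simp: H_def assms(1) False)
    then show ?thesis using False by simp
  qed
  have "SS P' u + SS P u = (\<Sum>a\<in>UNIV. \<Sum>b\<in>UNIV. H a b)"
    unfolding SS_def H_def by (simp add: sum.distrib[symmetric]) (intro sum.cong refl, auto)
  also have "\<dots> = (\<Sum>a\<in>UNIV. H a l) + (\<Sum>b\<in>UNIV. H l b)"
    by (subst sum.cong[OF refl inner]) (simp add: sum.distrib)
  finally have "SS P' u + SS P u = (\<Sum>a\<in>UNIV. H a l) + (\<Sum>b\<in>UNIV. H l b)" .
  then have "SS P' u = SS P u + ((\<Sum>a\<in>UNIV. H a l) + (\<Sum>b\<in>UNIV. H l b))"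
    by (metis add.assoc add.commute add_0 bit_add_self)
  then show ?thesis by (simp add: H_def add.assoc add.commute add.left_commute)
qed

definition mv :: "nat \<Rightarrow> nat \<Rightarrow> nat \<Rightarrow> nat" where
  "mv d k x = (if x \<le> k then x else if x = d then k + 1 else x + 1)"

lemma move_last_mv: "move_last d k g b = mv d k (g b)"
  unfolding move_last_def mv_def by simp

lemma mv_inj: "inj (mv d k)"
  unfolding inj_def mv_def by auto

lemma mv_range: "x \<in> {1..d} \<Longrightarrow> mv d k x \<in> {1..d}"
  unfolding mv_def by auto

lemma mv_range_rev: "mv d k x \<in> {1..d} \<Longrightarrow> x \<in> {1..d}"
  unfolding mv_def by (auto split: if_splits)

lemma mv_le: "j \<le> k \<Longrightarrow> (mv d k x \<le> j \<longleftrightarrow> x \<le> j)"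
  unfolding mv_def by auto

lemma mv_k[simp]: "mv d k k = k"
  unfolding mv_def by auto

lemma mv_d: "k < d \<Longrightarrow> mv d k d = k + 1"
  unfolding mv_def by auto

lemma mv_mono: "x \<noteq> d \<Longrightarrow> y \<noteq> d \<Longrightarrow> (mv d k x < mv d k y \<longleftrightarrow> x < y)"
  unfolding mv_def by auto

lemma mv_lt_k1: "x \<noteq> d \<Longrightarrow> (mv d k x < k + 1 \<longleftrightarrow> x \<le> k)"
  unfolding mv_def by auto

lemma mv_gt_k1: "x \<noteq> d \<Longrightarrow> (k + 1 < mv d k x \<longleftrightarrow> k < x)"
  unfolding mv_def by auto

lemma bij_card:
  fixes g :: "'a::finite \<Rightarrow> nat"
  assumes "inj g" "range g \<subseteq> {1..CARD('a)}"
  shows "bij_betw g UNIV {1..CARD('a)}"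
proof -
  have "card (range g) = CARD('a)" using assms(1) by (simp add: card_image)
  then have "range g = {1..CARD('a)}" using assms(2) by (intro card_subset_eq) auto
  then show ?thesis using assms(1) by (simp add: bij_betw_def)
qed

lemma letter_at_eq: "inj t \<Longrightarrow> t a = j \<Longrightarrow> letter_at t j = a"
  unfolding letter_at_def by (rule the_equality) (auto dest: injD)

lemma letter_at_inv: "bij_betw t UNIV {1..CARD('a::finite)} \<Longrightarrow> j \<in> {1..CARD('a)} \<Longrightarrow> t (letter_at t j) = j"
proof -
  assume b: "bij_betw t UNIV {1..CARD('a)}" and j: "j \<in> {1..CARD('a)}"
  then obtain a where "t a = j" unfolding bij_betw_def by (metis imageE)
  moreover have "inj t" using b by (simp add: bij_betw_def)
  ultimately show ?thesis by (simp add: letter_at_eq)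
qed

definition valid :: "('a::finite) perm2 \<Rightarrow> bool" where
  "valid p \<longleftrightarrow> is_perm2 p \<and> irreducible p"

lemma top_valid:
  fixes p :: "('a::finite) perm2"
  assumes d2: "CARD('a) \<ge> 2" and v: "valid p"
  shows "valid (top_op p) \<and> letter_at (fst p) CARD('a) \<noteq> letter_at (snd p) CARD('a)"
proof -
  define d where "d = CARD('a)"
  define t where "t = fst p"
  define s where "s = snd p"
  define w where "w = letter_at t d"
  define l where "l = letter_at s d"
  define k where "k = s w"
  have bt: "bij_betw t UNIV {1..d}" and bs: "bij_betw s UNIV {1..d}"
    using v unfolding valid_def is_perm2_def t_def s_def d_def by auto
  have irr: "\<And>j. 1 \<le> j \<Longrightarrow> j < d \<Longrightarrow> {a. t a \<le> j} \<noteq> {a. s a \<le> j}"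
    using v unfolding valid_def irreducible_def t_def s_def d_def by auto
  have tr: "t a \<in> {1..d}" and sr: "s a \<in> {1..d}" for a
    using bt bs by (auto simp: bij_betw_def)
  have it: "inj t" and is_: "inj s" using bt bs by (auto simp: bij_betw_def)
  have dpos: "d \<in> {1..d}" using d2 d_def by auto
  have tw: "t w = d" using letter_at_inv[OF bt[unfolded d_def] dpos[unfolded d_def]] w_def d_def by simp
  have sl: "s l = d" using letter_at_inv[OF bs[unfolded d_def] dpos[unfolded d_def]] l_def d_def by simp
  have wl: "w \<noteq> l"
  proof
    assume "w = l"
    have "{a. t a \<le> d - 1} = {a. s a \<le> d - 1}"
    proof (intro Collect_cong iffI)
      fix a assume "t a \<le> d - 1"
      then have "a \<noteq> w" using tw d2 d_def by auto
      then have "s a \<noteq> d" using sl \<open>w = l\<close> is_ by (auto dest: injD)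
      then show "s a \<le> d - 1" using sr[of a] by auto
    next
      fix a assume "s a \<le> d - 1"
      then have "a \<noteq> l" using sl d2 d_def by auto
      then have "t a \<noteq> d" using tw \<open>w = l\<close> it by (auto dest: injD)
      then show "t a \<le> d - 1" using tr[of a] by auto
    qed
    moreover have "1 \<le> d - 1" "d - 1 < d" using d2 d_def by auto
    ultimately show False using irr by blast
  qed
  have q: "top_op p = (t, mv d k \<circ> s)"
    unfolding top_op_def t_def s_def k_def w_def d_def by (simp add: fun_eq_iff move_last_mv)
  have "is_perm2 (top_op p)"
  proof -
    have "bij_betw (mv d k \<circ> s) UNIV {1..d}" unfolding d_def
      by (rule bij_card) (use mv_inj is_ mv_range sr d_def in \<open>auto intro: inj_compose\<close>)
    then show ?thesis unfolding q is_perm2_def using bt d_def by simp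
  qed
  moreover have "irreducible (top_op p)"
    unfolding irreducible_def q
  proof (intro allI impI)
    fix j assume j: "1 \<le> j \<and> j < CARD('a)"
    show "{a. fst (t, mv d k \<circ> s) a \<le> j} \<noteq> {a. snd (t, mv d k \<circ> s) a \<le> j}"
    proof (cases "j < k")
      case True
      then have "{a. (mv d k \<circ> s) a \<le> j} = {a. s a \<le> j}" by (auto simp: mv_le)
      then show ?thesis using irr[of j] j d_def by auto
    next
      case False
      then have "w \<in> {a. (mv d k \<circ> s) a \<le> j}" by (simp add: k_def)
      moreover have "w \<notin> {a. t a \<le> j}" using tw j d_def by auto
      ultimately show ?thesis by auto
    qed
  qed
  ultimately show ?thesis using wl unfolding valid_def w_def l_def t_def s_def d_def by auto
qed

lemma top_valid_rev:
  fixes r :: "('a::finite) perm2"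
  assumes d2: "CARD('a) \<ge> 2" and v: "valid (top_op r)"
  shows "valid r"
proof -
  define d where "d = CARD('a)"
  define t where "t = fst r"
  define s where "s = snd r"
  define w where "w = letter_at t d"
  define k where "k = s w"
  have q: "top_op r = (t, mv d k \<circ> s)"
    unfolding top_op_def t_def s_def k_def w_def d_def by (simp add: fun_eq_iff move_last_mv)
  have bt: "bij_betw t UNIV {1..d}" and bs: "bij_betw (mv d k \<circ> s) UNIV {1..d}"
    using v unfolding valid_def is_perm2_def q d_def by auto
  have irr: "\<And>j. 1 \<le> j \<Longrightarrow> j < d \<Longrightarrow> {a. t a \<le> j} \<noteq> {a. (mv d k \<circ> s) a \<le> j}"
    using v unfolding valid_def irreducible_def q d_def by auto
  have dpos: "d \<in> {1..d}" using d2 d_def by auto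
  have tw: "t w = d" using letter_at_inv[OF bt[unfolded d_def] dpos[unfolded d_def]] w_def d_def by simp
  have "inj (mv d k \<circ> s)" using bs by (simp add: bij_betw_def)
  then have is_: "inj s" using inj_on_imageI2 by blast
  have "range s \<subseteq> {1..d}"
  proof
    fix x assume "x \<in> range s"
    then obtain a where "x = s a" by auto
    moreover have "mv d k (s a) \<in> {1..d}" using bs by (auto simp: bij_betw_def)
    ultimately show "x \<in> {1..d}" using mv_range_rev by blast
  qed
  then have "bij_betw s UNIV {1..d}" using is_ bij_card d_def by blast
  then have "is_perm2 r" using bt unfolding is_perm2_def t_def s_def d_def by simp
  moreover have "irreducible r"
    unfolding irreducible_def
  proof (intro allI impI)
    fix j assume j: "1 \<le> j \<and> j < CARD('a)"
    show "{a. fst r a \<le> j} \<noteq> {a. snd r a \<le> j}"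
    proof (cases "j < k")
      case True
      then have "{a. (mv d k \<circ> s) a \<le> j} = {a. s a \<le> j}" by (auto simp: mv_le)
      then show ?thesis using irr[of j] j d_def t_def s_def by auto
    next
      case False
      then have "w \<in> {a. s a \<le> j}" by (simp add: k_def)
      moreover have "w \<notin> {a. t a \<le> j}" using tw j d_def by auto
      ultimately show ?thesis using t_def s_def by auto
    qed
  qed
  ultimately show ?thesis unfolding valid_def by simp
qed

lemma top_Q:
  fixes p :: "('a::finite) perm2"
  assumes d2: "CARD('a) \<ge> 2" and v: "valid p"
  shows "Qform p (vec_mat u (Bb (letter_at (snd p) CARD('a)) (letter_at (fst p) CARD('a)))) = Qform (top_op p) u"
proof -
  define d where "d = CARD('a)"
  define t where "t = fst p"
  define s where "s = snd p"
  define w where "w = letter_at t d"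
  define l where "l = letter_at s d"
  define k where "k = s w"
  have bt: "bij_betw t UNIV {1..d}" and bs: "bij_betw s UNIV {1..d}"
    using v unfolding valid_def is_perm2_def t_def s_def d_def by auto
  have tr: "t a \<in> {1..d}" and sr: "s a \<in> {1..d}" for a
    using bt bs by (auto simp: bij_betw_def)
  have it: "inj t" and is_: "inj s" using bt bs by (auto simp: bij_betw_def)
  have dpos: "d \<in> {1..d}" using d2 d_def by auto
  have tw: "t w = d" using letter_at_inv[OF bt[unfolded d_def] dpos[unfolded d_def]] w_def d_def by simp
  have sl: "s l = d" using letter_at_inv[OF bs[unfolded d_def] dpos[unfolded d_def]] l_def d_def by simp
  have wl: "w \<noteq> l" using top_valid[OF d2 v] unfolding w_def l_def t_def s_def d_def by simp
  have sne: "a \<noteq> l \<Longrightarrow> s a \<noteq> d" for a using sl is_ by (auto dest: injD)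
  have tne: "a \<noteq> l \<Longrightarrow> t a \<noteq> t l" for a using it by (auto dest: injD)
  have kd: "k < d" using sne[OF wl] sr[of w] k_def by auto
  have q: "top_op p = (t, mv d k \<circ> s)"
    unfolding top_op_def t_def s_def k_def w_def d_def by (simp add: fun_eq_iff move_last_mv)
  define P where "P a b = (t a < t b \<and> s b < s a)" for a b
  define P' where "P' a b = (t a < t b \<and> mv d k (s b) < mv d k (s a))" for a b
  define X where "X = (\<Sum>a\<in>UNIV. if a \<noteq> l \<and> k < s a then u a else 0)"
  have vm: "vec_mat u (Bb l w) = (\<lambda>j. u j + (if j = w then u l else 0))" by (rule vec_mat_Bb)
  have sumv: "(\<Sum>j\<in>UNIV. u j + (if j = w then u l else 0)) = (\<Sum>j\<in>UNIV. u j) + u l"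
    by (simp add: sum.distrib)
  have Pw1: "(\<Sum>b\<in>UNIV. if P w b then u b else 0) = 0"
    unfolding P_def using tw tr by (intro sum.neutral) (metis atLeastAtMost_iff leD)
  have Pww: "\<not> P w w" unfolding P_def by simp
  have Pw2: "(\<Sum>a\<in>UNIV. if P a w then u a else 0) = u l + X"
  proof -
    have "(\<Sum>a\<in>UNIV. if P a w then u a else 0) = (\<Sum>a\<in>UNIV. (if a = l then u l else 0) + (if a \<noteq> l \<and> k < s a then u a else 0))"
    proof (rule sum.cong[OF refl])
      fix a
      have "P a w \<longleftrightarrow> k < s a"
      proof
        assume "k < s a" then have "a \<noteq> w" using k_def by auto
        then have "t a \<noteq> d" using tw it by (auto dest: injD)
        then show "P a w" using tr[of a] tw \<open>k < s a\<close> k_def P_def by auto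
      qed (simp add: P_def k_def)
      then show "(if P a w then u a else 0) = (if a = l then u l else 0) + (if a \<noteq> l \<and> k < s a then u a else 0)"
        using sl kd by auto
    qed
    then show ?thesis by (simp add: sum.distrib X_def)
  qed
  have LHS: "Qform p (vec_mat u (Bb l w)) = SS P u + u l * (u l + X) + (\<Sum>j\<in>UNIV. u j) + u l"
    unfolding Qform_eq vm sumv SS_shift using Pw1 Pww Pw2
    by (simp add: P_def[symmetric] t_def[symmetric] s_def[symmetric] algebra_simps)
  have ch: "SS P' u = SS P u + (\<Sum>b\<in>UNIV. if P l b \<noteq> P' l b then u l * u b else 0)
     + (\<Sum>a\<in>UNIV. if P a l \<noteq> P' a l then u a * u l else 0)"
    by (rule SS_change) (auto simp: P_def P'_def mv_mono sne)
  have ch2: "(\<Sum>b\<in>UNIV. if P l b \<noteq> P' l b then u l * u b else 0)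
     + (\<Sum>a\<in>UNIV. if P a l \<noteq> P' a l then u a * u l else 0) = u l * X"
  proof -
    have "(\<Sum>b\<in>UNIV. if P l b \<noteq> P' l b then u l * u b else 0)
     + (\<Sum>a\<in>UNIV. if P a l \<noteq> P' a l then u a * u l else 0)
     = (\<Sum>a\<in>UNIV. u l * (if a \<noteq> l \<and> k < s a then u a else 0))"
      unfolding sum.distrib[symmetric]
    proof (rule sum.cong[OF refl])
      fix a
      show "(if P l a \<noteq> P' l a then u l * u a else 0) + (if P a l \<noteq> P' a l then u a * u l else 0)
        = u l * (if a \<noteq> l \<and> k < s a then u a else 0)"
      proof (cases "a = l")
        case True then show ?thesis by (simp add: P_def P'_def)
      next
        case False
        have 1: "(P l a \<noteq> P' l a) \<longleftrightarrow> t l < t a \<and> k < s a"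
          using False sne[OF False] sr[of a] sl mv_d[OF kd] mv_lt_k1[OF sne[OF False], of k]
          unfolding P_def P'_def by auto
        have 2: "(P a l \<noteq> P' a l) \<longleftrightarrow> t a < t l \<and> k < s a"
          using False sne[OF False] sr[of a] sl mv_d[OF kd] mv_gt_k1[OF sne[OF False], of k]
          unfolding P_def P'_def by auto
        show ?thesis using 1 2 tne[OF False] False by (auto simp: mult.commute)
      qed
    qed
    then show ?thesis by (simp add: X_def sum_distrib_left)
  qed
  have RHS: "Qform (top_op p) u = SS P u + u l * X + (\<Sum>j\<in>UNIV. u j)"
    unfolding Qform_eq q using ch ch2
    by (simp add: P'_def[symmetric] add.assoc)
  have fin: "SS P u + u l * (u l + X) + (\<Sum>j\<in>UNIV. u j) + u l = SS P u + u l * X + (\<Sum>j\<in>UNIV. u j)"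
    by (cases "u l") (simp_all add: algebra_simps)
  show ?thesis using LHS RHS fin unfolding w_def l_def t_def s_def d_def by simp
qed

definition sw :: "'a perm2 \<Rightarrow> 'a perm2" where "sw p = (snd p, fst p)"

lemma bot_sw: "bot_op p = sw (top_op (sw p))"
  unfolding bot_op_def top_op_def sw_def by simp

lemma valid_sw: "valid (sw p) = valid p"
  unfolding valid_def is_perm2_def irreducible_def sw_def by auto

lemma Qform_sw: "Qform (sw p) u = Qform p u"
proof -
  have "SS (\<lambda>a b. snd p a < snd p b \<and> fst p b < fst p a) u = SS (\<lambda>a b. fst p a < fst p b \<and> snd p b < snd p a) u"
    unfolding SS_def by (subst sum.swap) (auto simp: mult.commute intro!: sum.cong)
  then show ?thesis unfolding Qform_eq sw_def by simp
qed

lemma arrow_fwd: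
  fixes p :: "('a::finite) perm2"
  assumes d2: "CARD('a) \<ge> 2" and v: "valid p" and a: "rauzy_arrow p q l w"
  shows "valid q \<and> l \<noteq> w \<and> (\<forall>u. Qform p (vec_mat u (Bb l w)) = Qform q u)"
  using a unfolding rauzy_arrow_def
proof (elim disjE conjE)
  assume "q = top_op p" "w = letter_at (fst p) CARD('a)" "l = letter_at (snd p) CARD('a)"
  then show ?thesis using top_valid[OF d2 v] top_Q[OF d2 v] by auto
next
  assume h: "q = bot_op p" "w = letter_at (snd p) CARD('a)" "l = letter_at (fst p) CARD('a)"
  have v': "valid (sw p)" using v valid_sw by blast
  have "w = letter_at (fst (sw p)) CARD('a)" "l = letter_at (snd (sw p)) CARD('a)"
    using h by (simp_all add: sw_def)
  then show ?thesis using top_valid[OF d2 v'] top_Q[OF d2 v'] h(1) bot_sw valid_sw Qform_sw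
    by metis
qed

lemma arrow_bwd:
  fixes r :: "('a::finite) perm2"
  assumes d2: "CARD('a) \<ge> 2" and v: "valid q" and a: "rauzy_arrow r q l w"
  shows "valid r"
  using a unfolding rauzy_arrow_def
proof (elim disjE conjE)
  assume "q = top_op r" then show ?thesis using top_valid_rev[OF d2] v by blast
next
  assume "q = bot_op r" then show ?thesis using top_valid_rev[OF d2] v bot_sw valid_sw by metis
qed

lemma mat_mult_rows: "mat_mult A B = (\<lambda>i. vec_mat (A i) B)"
  unfolding mat_mult_def vec_mat_def by simp

lemma vec_mat_Bb_sq: "l \<noteq> w \<Longrightarrow> vec_mat (vec_mat u (Bb l w)) (Bb l w) = u"
  unfolding vec_mat_Bb by (auto simp: fun_eq_iff add.assoc)

lemma Bb_sq: "l \<noteq> w \<Longrightarrow> mat_mult (Bb l w) (Bb l w) = mat_id"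
proof -
  assume lw: "l \<noteq> w"
  have "mat_mult (Bb l w) (Bb l w) = mat_mult (mat_mult mat_id (Bb l w)) (Bb l w)" by simp
  also have "\<dots> = (\<lambda>i. vec_mat (vec_mat (mat_id i) (Bb l w)) (Bb l w))"
    by (simp only: mat_mult_rows)
  also have "\<dots> = mat_id" using vec_mat_Bb_sq[OF lw] by simp
  finally show ?thesis .
qed

lemma mod2_id[simp]: "mat_mod2 mat_id = mat_id"
  unfolding mat_mod2_def mat_id_def by (simp add: fun_eq_iff)

lemma vec_mat_id[simp]: "vec_mat u mat_id = u"
  unfolding vec_mat_def mat_id_def by (simp add: fun_eq_iff)

lemma walk_inv:
  fixes p :: "('a::finite) perm2"
  assumes "walk_mat p q M" and d2: "CARD('a) \<ge> 2" and v: "valid p"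
  shows "valid q \<and> (\<forall>u. Qform p (vec_mat u (mat_mod2 M)) = Qform q u) \<and>
    (\<exists>T. mat_mult (mat_mod2 M) T = mat_id \<and> mat_mult T (mat_mod2 M) = mat_id)"
  using assms(1)
proof (induction rule: walk_mat.induct)
  case nil
  then show ?case using v by (auto intro: exI[of _ mat_id])
next
  case (fwd q M r l w)
  from fwd.IH obtain T where T: "mat_mult (mat_mod2 M) T = mat_id" "mat_mult T (mat_mod2 M) = mat_id"
    and vq: "valid q" and Qq: "\<forall>u. Qform p (vec_mat u (mat_mod2 M)) = Qform q u" by blast
  have ar: "valid r \<and> l \<noteq> w \<and> (\<forall>u. Qform q (vec_mat u (Bb l w)) = Qform r u)"
    by (rule arrow_fwd[OF d2 vq fwd.hyps(2)])
  have m: "mat_mod2 (mat_mult (B_arrow l w) M) = mat_mult (Bb l w) (mat_mod2 M)"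
    by (simp add: mat_mod2_mult Bb_def)
  have i1: "mat_mult (mat_mult (Bb l w) (mat_mod2 M)) (mat_mult T (Bb l w)) = mat_id"
  proof -
    have sq: "mat_mult (Bb l w) (Bb l w) = mat_id" using ar Bb_sq by blast
    show ?thesis
      using T sq by (metis mat_mult_assoc mat_mult_id_left mat_mult_id_right)
  qed
  have i2: "mat_mult (mat_mult T (Bb l w)) (mat_mult (Bb l w) (mat_mod2 M)) = mat_id"
  proof -
    have sq: "mat_mult (Bb l w) (Bb l w) = mat_id" using ar Bb_sq by blast
    show ?thesis
      using T sq by (metis mat_mult_assoc mat_mult_id_left mat_mult_id_right)
  qed
  show ?case unfolding m using ar Qq i1 i2 by (auto simp: vec_mat_mult)
next
  case (bwd q M r l w)
  from bwd.IH obtain T where T: "mat_mult (mat_mod2 M) T = mat_id" "mat_mult T (mat_mod2 M) = mat_id"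
    and vq: "valid q" and Qq: "\<forall>u. Qform p (vec_mat u (mat_mod2 M)) = Qform q u" by blast
  have vr: "valid r" by (rule arrow_bwd[OF d2 vq bwd.hyps(2)])
  have ar: "valid q \<and> l \<noteq> w \<and> (\<forall>u. Qform r (vec_mat u (Bb l w)) = Qform q u)"
    by (rule arrow_fwd[OF d2 vr bwd.hyps(2)])
  have m: "mat_mod2 (mat_mult (B_arrow_inv l w) M) = mat_mult (Bb l w) (mat_mod2 M)"
    by (simp add: mat_mod2_mult mod2_inv)
  have i1: "mat_mult (mat_mult (Bb l w) (mat_mod2 M)) (mat_mult T (Bb l w)) = mat_id"
  proof -
    have sq: "mat_mult (Bb l w) (Bb l w) = mat_id" using ar Bb_sq by blast
    show ?thesis
      using T sq by (metis mat_mult_assoc mat_mult_id_left mat_mult_id_right)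
  qed
  have i2: "mat_mult (mat_mult T (Bb l w)) (mat_mult (Bb l w) (mat_mod2 M)) = mat_id"
  proof -
    have sq: "mat_mult (Bb l w) (Bb l w) = mat_id" using ar Bb_sq by blast
    show ?thesis
      using T sq by (metis mat_mult_assoc mat_mult_id_left mat_mult_id_right)
  qed
  have Q: "Qform p (vec_mat u (mat_mult (Bb l w) (mat_mod2 M))) = Qform r u" for u
  proof -
    have "Qform p (vec_mat u (mat_mult (Bb l w) (mat_mod2 M))) = Qform q (vec_mat u (Bb l w))"
      using Qq by (simp add: vec_mat_mult)
    also have "\<dots> = Qform r (vec_mat (vec_mat u (Bb l w)) (Bb l w))" using ar by metis
    also have "\<dots> = Qform r u" using ar vec_mat_Bb_sq by metis
    finally show ?thesis .
  qed
  show ?case unfolding m using vr Q i1 i2 by auto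
qed

theorem corollary2p12:
  fixes p :: "('a::finite) perm2"
  assumes "CARD('a) \<ge> 3"
    and "is_perm2 p"
    and "irreducible p"
    and "\<not> degenerate p"
  shows "mat_mod2 ` RV p \<subseteq> OQ p"
proof
  fix S assume "S \<in> mat_mod2 ` RV p"
  then obtain M where S: "S = mat_mod2 M" and "walk_mat p p M" unfolding RV_def by auto
  moreover have "CARD('a) \<ge> 2" using assms(1) by simp
  moreover have "valid p" using assms(2,3) by (simp add: valid_def)
  ultimately have "(\<forall>u. Qform p (vec_mat u S) = Qform p u) \<and>
    (\<exists>T. mat_mult S T = mat_id \<and> mat_mult T S = mat_id)" using walk_inv by blast
  then show "S \<in> OQ p" unfolding OQ_def by blast
qed

end
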